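(* Let $n\ge0$ and let $\mathcal V$ be a variety with $n+2$ Gumm terms. (i) For every $q\ge1$, $\mathcal V$ is $(2^q+1,\,(2^{q+1}-2)n+2)$-modular. (ii) For every $q\ge2$, $\mathcal V$ is $(2^q-1,\,(2^{q+1}-2q-2)n+2)$-modular.
   Context: $\circ$ is relational composition, juxtaposition is intersection. For relations $X,Y$ and $m\ge1$, $X\circ_m Y$ denotes $X\circ Y\circ X\circ\cdots$ with $m$ factors. For $m\ge3$, a variety is $(m,k)$-modular if each of its algebras satisfies $\alpha(\beta\circ_m\alpha\gamma)\subseteq\alpha\beta\circ_k\alpha\gamma$ for all congruences $\alpha,\beta,\gamma$. A variety has $n+2$ Gumm terms if it has ternary terms $p,j_1,\dots,j_{n+1}$ satisfying: $x=j_i(x,y,x)$ for all $i$; $x=p(x,z,z)$; $p(x,x,z)=j_1(x,x,z)$; $j_i(x,z,z)=j_{i+1}(x,z,z)$ for odd $i\le n$; $j_i(x,x,z)=j_{i+1}(x,x,z)$ for even $i\le n$; $j_{n+1}(x,y,z)=z$. *)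

theory Defs
  imports Main
begin

type_synonym ('f, 'a) alg = "'a set \<times> ('f \<Rightarrow> 'a list \<Rightarrow> 'a)"

definition carrier :: "('f, 'a) alg \<Rightarrow> 'a set" where
  "carrier A = fst A"

definition ops :: "('f, 'a) alg \<Rightarrow> 'f \<Rightarrow> 'a list \<Rightarrow> 'a" where
  "ops A = snd A"

definition is_algebra :: "('f \<Rightarrow> nat) \<Rightarrow> ('f, 'a) alg \<Rightarrow> bool" where
  "is_algebra ar A \<longleftrightarrow> carrier A \<noteq> {} \<and>
     (\<forall>f xs. length xs = ar f \<and> set xs \<subseteq> carrier A \<longrightarrow> ops A f xs \<in> carrier A)"

datatype ('f, 'v) trm = Var 'v | Fun 'f "('f, 'v) trm list"

fun wf_trm :: "('f \<Rightarrow> nat) \<Rightarrow> ('f, 'v) trm \<Rightarrow> bool" where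
  "wf_trm ar (Var v) = True"
| "wf_trm ar (Fun f ts) = (length ts = ar f \<and> (\<forall>t\<in>set ts. wf_trm ar t))"

fun vars_trm :: "('f, 'v) trm \<Rightarrow> 'v set" where
  "vars_trm (Var v) = {v}"
| "vars_trm (Fun f ts) = (\<Union>t\<in>set ts. vars_trm t)"

fun eval :: "('f, 'a) alg \<Rightarrow> ('v \<Rightarrow> 'a) \<Rightarrow> ('f, 'v) trm \<Rightarrow> 'a" where
  "eval A \<rho> (Var v) = \<rho> v"
| "eval A \<rho> (Fun f ts) = ops A f (map (eval A \<rho>) ts)"

definition satisfies :: "('f, 'a) alg \<Rightarrow> ('f, nat) trm \<Rightarrow> ('f, nat) trm \<Rightarrow> bool" where
  "satisfies A s t \<longleftrightarrow> (\<forall>\<rho>. (\<forall>v. \<rho> v \<in> carrier A) \<longrightarrow> eval A \<rho> s = eval A \<rho> t)"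

text \<open>A variety (with carriers in type 'a): an equational class, i.e. the class
  of all algebras of the signature satisfying a set E of identities
  (equivalently, by Birkhoff's theorem, a class closed under H, S, P).\<close>
definition variety :: "('f \<Rightarrow> nat) \<Rightarrow> ('f, 'a) alg set \<Rightarrow> bool" where
  "variety ar V \<longleftrightarrow> (\<exists>E :: (('f, nat) trm \<times> ('f, nat) trm) set.
     (\<forall>(s, t)\<in>E. wf_trm ar s \<and> wf_trm ar t) \<and>
     V = {A. is_algebra ar A \<and> (\<forall>(s, t)\<in>E. satisfies A s t)})"

definition congruence :: "('f \<Rightarrow> nat) \<Rightarrow> ('f, 'a) alg \<Rightarrow> 'a rel \<Rightarrow> bool" where
  "congruence ar A \<theta> \<longleftrightarrow> equiv (carrier A) \<theta> \<and>
     (\<forall>f xs ys. length xs = ar f \<and> length ys = ar f \<and>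
        set xs \<subseteq> carrier A \<and> set ys \<subseteq> carrier A \<and>
        list_all2 (\<lambda>x y. (x, y) \<in> \<theta>) xs ys \<longrightarrow> (ops A f xs, ops A f ys) \<in> \<theta>)"

text \<open>altc X Y m = X o Y o X o ... with m factors (m >= 1); O is relational
  composition (a,c) in X O Y iff exists b. (a,b) in X and (b,c) in Y.\<close>
fun altc :: "'a rel \<Rightarrow> 'a rel \<Rightarrow> nat \<Rightarrow> 'a rel" where
  "altc X Y 0 = Id"
| "altc X Y (Suc 0) = X"
| "altc X Y (Suc (Suc k)) = X O altc Y X (Suc k)"

definition mk_modular :: "('f \<Rightarrow> nat) \<Rightarrow> ('f, 'a) alg set \<Rightarrow> nat \<Rightarrow> nat \<Rightarrow> bool" where
  "mk_modular ar V m k \<longleftrightarrow> (\<forall>A\<in>V. \<forall>\<alpha> \<beta> \<gamma>.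
     congruence ar A \<alpha> \<and> congruence ar A \<beta> \<and> congruence ar A \<gamma> \<longrightarrow>
     \<alpha> \<inter> altc \<beta> (\<alpha> \<inter> \<gamma>) m \<subseteq> altc (\<alpha> \<inter> \<beta>) (\<alpha> \<inter> \<gamma>) k)"

text \<open>Ternary terms use variables 0, 1, 2 (for x, y, z); top3 A t a b c is the
  ternary term operation of t in A applied to a, b, c.\<close>
definition ternary :: "('f \<Rightarrow> nat) \<Rightarrow> ('f, nat) trm \<Rightarrow> bool" where
  "ternary ar t \<longleftrightarrow> wf_trm ar t \<and> vars_trm t \<subseteq> {0, 1, 2}"

definition top3 :: "('f, 'a) alg \<Rightarrow> ('f, nat) trm \<Rightarrow> 'a \<Rightarrow> 'a \<Rightarrow> 'a \<Rightarrow> 'a" where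
  "top3 A t a b c = eval A (\<lambda>v. if v = 0 then a else if v = 1 then b else c) t"

text \<open>V has n+2 Gumm terms p, j_1, ..., j_{n+1}.\<close>
definition has_gumm_terms :: "('f \<Rightarrow> nat) \<Rightarrow> ('f, 'a) alg set \<Rightarrow> nat \<Rightarrow> bool" where
  "has_gumm_terms ar V n \<longleftrightarrow> (\<exists>(p :: ('f, nat) trm) (j :: nat \<Rightarrow> ('f, nat) trm).
     ternary ar p \<and> (\<forall>i\<in>{1..n+1}. ternary ar (j i)) \<and>
     (\<forall>A\<in>V. \<forall>x\<in>carrier A. \<forall>y\<in>carrier A. \<forall>z\<in>carrier A.
        (\<forall>i\<in>{1..n+1}. x = top3 A (j i) x y x) \<and>
        x = top3 A p x z z \<and>
        top3 A p x x z = top3 A (j 1) x x z \<and>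
        (\<forall>i\<in>{1..n}. odd i \<longrightarrow> top3 A (j i) x z z = top3 A (j (i+1)) x z z) \<and>
        (\<forall>i\<in>{1..n}. even i \<longrightarrow> top3 A (j i) x x z = top3 A (j (i+1)) x x z) \<and>
        top3 A (j (n+1)) x y z = z))"

end

theory Submission
  imports Defs
begin


lemma eval_carrier:
  assumes "is_algebra ar A" "\<forall>v. \<rho> v \<in> carrier A"
  shows "wf_trm ar t \<Longrightarrow> eval A \<rho> t \<in> carrier A"
proof (induction t)
  case (Var v) then show ?case using assms by simp
next
  case (Fun f ts)
  have "set (map (eval A \<rho>) ts) \<subseteq> carrier A" using Fun by auto
  then show ?case using assms(1) Fun(2) unfolding is_algebra_def by simp
qed

lemma eval_cong:
  assumes "is_algebra ar A" "congruence ar A \<theta>" "\<forall>v. \<rho> v \<in> carrier A" "\<forall>v. \<rho>' v \<in> carrier A"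
    "\<forall>v. (\<rho> v, \<rho>' v) \<in> \<theta>"
  shows "wf_trm ar t \<Longrightarrow> (eval A \<rho> t, eval A \<rho>' t) \<in> \<theta>"
proof (induction t)
  case (Var v) then show ?case using assms by simp
next
  case (Fun f ts)
  have c1: "set (map (eval A \<rho>) ts) \<subseteq> carrier A" using Fun eval_carrier[OF assms(1,3)] by auto
  have c2: "set (map (eval A \<rho>') ts) \<subseteq> carrier A" using Fun eval_carrier[OF assms(1,4)] by auto
  have "list_all2 (\<lambda>x y. (x, y) \<in> \<theta>) (map (eval A \<rho>) ts) (map (eval A \<rho>') ts)"
    using Fun by (simp add: list_all2_map1 list_all2_map2 list_all2_same)
  then show ?case using assms(2) c1 c2 Fun(2) unfolding congruence_def by simp
qed

lemma cong_sub: "congruence ar A \<theta> \<Longrightarrow> \<theta> \<subseteq> carrier A \<times> carrier A"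
  unfolding congruence_def equiv_def by blast

lemma top3_carrier:
  assumes "is_algebra ar A" "wf_trm ar t" "a \<in> carrier A" "b \<in> carrier A" "c \<in> carrier A"
  shows "top3 A t a b c \<in> carrier A"
  unfolding top3_def using assms by (intro eval_carrier) auto

lemma top3_cong:
  assumes "is_algebra ar A" "congruence ar A \<theta>" "wf_trm ar t"
    "(a,a') \<in> \<theta>" "(b,b') \<in> \<theta>" "(c,c') \<in> \<theta>"
  shows "(top3 A t a b c, top3 A t a' b' c') \<in> \<theta>"
proof -
  have s: "\<theta> \<subseteq> carrier A \<times> carrier A" by (rule cong_sub[OF assms(2)])
  show ?thesis unfolding top3_def
    apply (rule eval_cong[OF assms(1,2) _ _ _ assms(3)])
    using assms(4-6) s by auto
qed

lemma cong_Int: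
  assumes "congruence ar A \<theta>1" "congruence ar A \<theta>2"
  shows "congruence ar A (\<theta>1 \<inter> \<theta>2)"
proof -
  have "equiv (carrier A) (\<theta>1 \<inter> \<theta>2)"
    using assms unfolding congruence_def equiv_def refl_on_def sym_def trans_def by blast
  moreover have "(ops A f xs, ops A f ys) \<in> \<theta>1 \<inter> \<theta>2"
    if "length xs = ar f" "length ys = ar f" "set xs \<subseteq> carrier A" "set ys \<subseteq> carrier A"
      "list_all2 (\<lambda>x y. (x, y) \<in> \<theta>1 \<inter> \<theta>2) xs ys" for f xs ys
  proof -
    have "list_all2 (\<lambda>x y. (x, y) \<in> \<theta>1) xs ys" "list_all2 (\<lambda>x y. (x, y) \<in> \<theta>2) xs ys"
      using that(5) by (auto elim: list_all2_mono)
    then show ?thesis using assms that unfolding congruence_def by blast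
  qed
  ultimately show ?thesis unfolding congruence_def by blast
qed

lemma cong_refl: "congruence ar A \<theta> \<Longrightarrow> x \<in> carrier A \<Longrightarrow> (x,x) \<in> \<theta>"
  unfolding congruence_def equiv_def refl_on_def by blast
lemma cong_sym: "congruence ar A \<theta> \<Longrightarrow> sym \<theta>"
  unfolding congruence_def equiv_def by blast
lemma cong_trans: "congruence ar A \<theta> \<Longrightarrow> trans \<theta>"
  unfolding congruence_def equiv_def by blast



definition fpath :: "'a rel \<Rightarrow> 'a rel \<Rightarrow> nat \<Rightarrow> (nat \<Rightarrow> 'a) \<Rightarrow> bool" where
  "fpath X Y m f \<longleftrightarrow> (\<forall>i<m. (f i, f (Suc i)) \<in> (if even i then X else Y))"

definition pth :: "'a rel \<Rightarrow> 'a rel \<Rightarrow> nat \<Rightarrow> 'a \<Rightarrow> 'a \<Rightarrow> bool" where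
  "pth X Y m a c \<longleftrightarrow> (\<exists>f. f 0 = a \<and> f m = c \<and> fpath X Y m f)"

lemma pth_Suc: "pth X Y (Suc m) a c \<longleftrightarrow> (\<exists>b. (a,b)\<in>X \<and> pth Y X m b c)"
proof
  assume "pth X Y (Suc m) a c"
  then obtain f where f: "f 0 = a" "f (Suc m) = c" "fpath X Y (Suc m) f" unfolding pth_def by blast
  have "(a, f 1) \<in> X" using f unfolding fpath_def by (metis One_nat_def even_zero zero_less_Suc)
  moreover have "fpath Y X m (\<lambda>i. f (Suc i))" using f(3) unfolding fpath_def by auto
  ultimately show "\<exists>b. (a,b)\<in>X \<and> pth Y X m b c" unfolding pth_def using f by auto
next
  assume "\<exists>b. (a,b)\<in>X \<and> pth Y X m b c"
  then obtain b g where g: "(a,b)\<in>X" "g 0 = b" "g m = c" "fpath Y X m g" unfolding pth_def by blast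
  define f where "f i = (if i = 0 then a else g (i - 1))" for i
  have "fpath X Y (Suc m) f" unfolding fpath_def
  proof (intro allI impI)
    fix i assume i: "i < Suc m"
    show "(f i, f (Suc i)) \<in> (if even i then X else Y)"
    proof (cases i)
      case 0 then show ?thesis using g by (simp add: f_def)
    next
      case (Suc i') then show ?thesis using g(4) i unfolding fpath_def f_def by auto
    qed
  qed
  then show "pth X Y (Suc m) a c" unfolding pth_def using g by (intro exI[of _ f]) (auto simp: f_def)
qed

lemma pth_0: "pth X Y 0 a c \<longleftrightarrow> a = c"
  unfolding pth_def fpath_def by (auto intro!: exI[of _ "\<lambda>_. c"])

lemma altc_pth: "(a,c) \<in> altc X Y m \<longleftrightarrow> pth X Y m a c"
proof (induction X Y m arbitrary: a c rule: altc.induct)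
  case (1 X Y) then show ?case by (simp add: pth_0)
next
  case (2 X Y) then show ?case by (simp add: pth_Suc pth_0)
next
  case (3 X Y k)
  have "(a,c) \<in> altc X Y (Suc (Suc k)) \<longleftrightarrow> (\<exists>b. (a,b)\<in>X \<and> (b,c) \<in> altc Y X (Suc k))" by auto
  also have "\<dots> \<longleftrightarrow> (\<exists>b. (a,b)\<in>X \<and> pth Y X (Suc k) b c)" using 3 by blast
  also have "\<dots> \<longleftrightarrow> pth X Y (Suc (Suc k)) a c" by (rule pth_Suc[symmetric])
  finally show ?case .
qed

lemma pth_merge:
  assumes "odd m1" "trans X" "pth X Y m1 a b" "pth X Y m2 b c" "m2 \<ge> 1"
  shows "pth X Y (m1 + m2 - 1) a c"
proof -
  obtain f1 where f1: "f1 0 = a" "f1 m1 = b" "fpath X Y m1 f1" using assms(3) unfolding pth_def by blast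
  obtain f2 where f2: "f2 0 = b" "f2 m2 = c" "fpath X Y m2 f2" using assms(4) unfolding pth_def by blast
  define g where "g i = (if i < m1 then f1 i else f2 (i + 1 - m1))" for i
  have m1: "m1 \<ge> 1" using assms(1) by (cases m1) auto
  have "fpath X Y (m1 + m2 - 1) g" unfolding fpath_def
  proof (intro allI impI)
    fix i assume i: "i < m1 + m2 - 1"
    consider "Suc i < m1" | "Suc i = m1" | "i \<ge> m1" by linarith
    then show "(g i, g (Suc i)) \<in> (if even i then X else Y)"
    proof cases
      case 1 then show ?thesis using f1(3) unfolding fpath_def g_def by auto
    next
      case 2
      have e: "even i" using 2 assms(1) by auto
      have "(f1 i, f1 (Suc i)) \<in> X" using f1(3) 2 e unfolding fpath_def by auto
      moreover have "(f2 0, f2 1) \<in> X" using f2(3) assms(5) unfolding fpath_def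
        by (metis One_nat_def even_zero less_le_trans zero_less_one)
      ultimately have "(f1 i, f2 1) \<in> X" using 2 f1(2) f2(1) assms(2) unfolding trans_def by metis
      then show ?thesis using 2 e unfolding g_def by auto
    next
      case 3
      have "i + 1 - m1 < m2" using i 3 by linarith
      then have "(f2 (i + 1 - m1), f2 (Suc (i + 1 - m1))) \<in> (if even (i + 1 - m1) then X else Y)"
        using f2(3) unfolding fpath_def by blast
      moreover have "even (i + 1 - m1) \<longleftrightarrow> even i" using 3 assms(1) by (auto simp: even_diff_nat)
      moreover have "Suc (i + 1 - m1) = Suc i + 1 - m1" using 3 by simp
      ultimately show ?thesis using 3 unfolding g_def by auto
    qed
  qed
  moreover have "g 0 = a" using m1 f1 by (simp add: g_def)
  moreover have "g (m1 + m2 - 1) = c"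
  proof -
    have "\<not> (m1 + m2 - 1 < m1)" "m1 + m2 - 1 + 1 - m1 = m2" using assms(5) m1 by auto
    then show ?thesis using f2 unfolding g_def by simp
  qed
  ultimately show ?thesis unfolding pth_def by blast
qed

lemma pth_rev:
  assumes "odd m" "sym X" "sym Y" "pth X Y m a c"
  shows "pth X Y m c a"
proof -
  obtain f where f: "f 0 = a" "f m = c" "fpath X Y m f" using assms(4) unfolding pth_def by blast
  define g where "g i = f (m - i)" for i
  have "fpath X Y m g" unfolding fpath_def
  proof (intro allI impI)
    fix i assume i: "i < m"
    define j where "j = m - Suc i"
    have j: "j < m" "m - i = Suc j" "m - Suc i = j" using i by (auto simp: j_def)
    have "j + Suc i = m" using i by (simp add: j_def)
    have "(f j, f (Suc j)) \<in> (if even j then X else Y)" using f(3) j unfolding fpath_def by blast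
    moreover have "even j \<longleftrightarrow> even i" using assms(1) i unfolding j_def
      using assms(1) \<open>j + Suc i = m\<close> by presburger
    ultimately show "(g i, g (Suc i)) \<in> (if even i then X else Y)"
      using assms(2,3) j unfolding g_def sym_def by (auto split: if_splits)
  qed
  then show ?thesis unfolding pth_def using f by (intro exI[of _ g]) (auto simp: g_def)
qed

lemma pth_last:
  assumes "even k" "k \<ge> 2" "trans Y" "pth X Y k a b" "(b,c) \<in> Y"
  shows "pth X Y k a c"
proof -
  obtain f where f: "f 0 = a" "f k = b" "fpath X Y k f" using assms(4) unfolding pth_def by blast
  define g where "g = f(k := c)"
  have "fpath X Y k g" unfolding fpath_def
  proof (intro allI impI)
    fix i assume i: "i < k"
    show "(g i, g (Suc i)) \<in> (if even i then X else Y)"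
    proof (cases "Suc i = k")
      case True
      then have "odd i" using assms(1) by auto
      then have "(f i, b) \<in> Y" using f True i unfolding fpath_def by force
      then have "(f i, c) \<in> Y" using assms(3,5) unfolding trans_def by blast
      then show ?thesis using True \<open>odd i\<close> unfolding g_def by auto
    next
      case False then show ?thesis using f(3) i unfolding fpath_def g_def by auto
    qed
  qed
  then show ?thesis unfolding pth_def using f assms(2) by (intro exI[of _ g]) (auto simp: g_def)
qed

lemma fpath_carrier:
  assumes "X \<subseteq> C \<times> C" "Y \<subseteq> C \<times> C" "fpath X Y m f" "m \<ge> 1" "t \<le> m"
  shows "f t \<in> C"
proof (cases "t < m")
  case True
  then have "(f t, f (Suc t)) \<in> (if even t then X else Y)" using assms(3) unfolding fpath_def by blast
  then show ?thesis using assms(1,2) by (auto split: if_splits)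
next
  case False
  then have t: "t = Suc (m - 1)" using assms by auto
  have "m - 1 < m" using assms(4) by simp
  then have "(f (m-1), f (Suc (m-1))) \<in> (if even (m-1) then X else Y)" using assms(3) unfolding fpath_def by blast
  then show ?thesis using assms(1,2) t by (auto split: if_splits)
qed



definition gumm :: "('f,'a) alg \<Rightarrow> nat \<Rightarrow> ('f,nat) trm \<Rightarrow> (nat \<Rightarrow> ('f,nat) trm) \<Rightarrow> bool" where
 "gumm A n p j \<longleftrightarrow> (\<forall>x\<in>carrier A. \<forall>y\<in>carrier A. \<forall>z\<in>carrier A.
        (\<forall>i\<in>{1..n+1}. x = top3 A (j i) x y x) \<and>
        x = top3 A p x z z \<and>
        top3 A p x x z = top3 A (j 1) x x z \<and>
        (\<forall>i\<in>{1..n}. odd i \<longrightarrow> top3 A (j i) x z z = top3 A (j (i+1)) x z z) \<and>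
        (\<forall>i\<in>{1..n}. even i \<longrightarrow> top3 A (j i) x x z = top3 A (j (i+1)) x x z) \<and>
        top3 A (j (n+1)) x y z = z)"

lemma step_odd:
  assumes alg: "is_algebra ar A" and ca: "congruence ar A \<alpha>" and cb: "congruence ar A \<beta>"
    and cg: "congruence ar A \<gamma>"
    and wp: "wf_trm ar p" and wj: "\<forall>i\<in>{1..n+1}. wf_trm ar (j i)"
    and G: "gumm A n p j"
    and M: "M = 2*L - 1" "L \<ge> 1"
    and modL: "\<alpha> \<inter> altc \<beta> (\<alpha>\<inter>\<gamma>) L \<subseteq> altc (\<alpha>\<inter>\<beta>) (\<alpha>\<inter>\<gamma>) k" and k: "k \<ge> 1"
    and xz: "(x,z) \<in> \<alpha> \<inter> altc \<beta> (\<alpha>\<inter>\<gamma>) M"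
  shows "(x,z) \<in> altc (\<alpha>\<inter>\<beta>) (\<alpha>\<inter>\<gamma>) (k + n*(M-1))"
proof -
  let ?X = "\<alpha>\<inter>\<beta>" and ?Y = "\<alpha>\<inter>\<gamma>" and ?C = "carrier A"
  have cX: "congruence ar A ?X" and cY: "congruence ar A ?Y" using cong_Int[OF ca cb] cong_Int[OF ca cg] by auto
  have cR: "congruence ar A (if even t then \<beta> else ?Y)" for t using cb cY by auto
  have oM: "odd M" and M1: "M \<ge> 1" using M by presburger+
  have "pth \<beta> ?Y M x z" using xz by (simp add: altc_pth)
  then have "pth \<beta> ?Y M z x" by (rule pth_rev[OF oM cong_sym[OF cb] cong_sym[OF cY]])
  then obtain f where f0: "f 0 = z" and fM: "f M = x" and fp: "fpath \<beta> ?Y M f"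
    unfolding pth_def by blast
  have fc: "f t \<in> ?C" if "t \<le> M" for t
    using fpath_carrier[OF cong_sub[OF cb] cong_sub[OF cY] fp M1 that] .
  have zc: "z \<in> ?C" and xc: "x \<in> ?C" using fc[of 0] fc[of M] f0 fM by auto
  have xza: "(x,z) \<in> \<alpha>" using xz by blast
  have fs: "(f t, f (Suc t)) \<in> (if even t then \<beta> else ?Y)" if "t < M" for t
    using fp that unfolding fpath_def by blast
  note GG = G[unfolded gumm_def, THEN bspec, THEN bspec, THEN bspec]
  have G1: "\<forall>i\<in>{1..n+1}. a = top3 A (j i) a b a" if "a \<in> ?C" "b \<in> ?C" for a b
    using GG[OF that(1) that(2) that(1)] by (elim conjE)
  have G2: "a = top3 A p a c c" if "a \<in> ?C" "c \<in> ?C" for a c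
    using GG[OF that(1) that(2) that(2)] by (elim conjE)
  have G3: "top3 A p a a c = top3 A (j 1) a a c" if "a \<in> ?C" "c \<in> ?C" for a c
    using GG[OF that(1) that(2) that(2)] by (elim conjE)
  have G4: "top3 A (j i) a c c = top3 A (j (i+1)) a c c" if "a \<in> ?C" "c \<in> ?C" "i \<in> {1..n}" "odd i" for a c i
  proof -
    have "\<forall>i\<in>{1..n}. odd i \<longrightarrow> top3 A (j i) a c c = top3 A (j (i+1)) a c c"
      using GG[OF that(1) that(2) that(2)] by (elim conjE)
    then show ?thesis using that(3,4) by blast
  qed
  have G5: "top3 A (j i) a a c = top3 A (j (i+1)) a a c" if "a \<in> ?C" "c \<in> ?C" "i \<in> {1..n}" "even i" for a c i
  proof -
    have "\<forall>i\<in>{1..n}. even i \<longrightarrow> top3 A (j i) a a c = top3 A (j (i+1)) a a c"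
      using GG[OF that(1) that(2) that(2)] by (elim conjE)
    then show ?thesis using that(3,4) by blast
  qed
  have G6: "top3 A (j (n+1)) a b c = c" if "a \<in> ?C" "b \<in> ?C" "c \<in> ?C" for a b c
    using GG[OF that(1) that(2) that(3)] by (elim conjE)
  define h where "h = L - 1"
  have Mh: "M = 2*h + 1" using M by (simp add: h_def)
  define g where "g t = (if t \<le> h then top3 A p z (f t) (f (M - t)) else z)" for t
  have "fpath \<beta> ?Y L g" unfolding fpath_def
  proof (intro allI impI)
    fix t assume tL: "t < L"
    show "(g t, g (Suc t)) \<in> (if even t then \<beta> else ?Y)"
    proof (cases "t < h")
      case True
      define s where "s = M - Suc t"
      have s: "s < M" "M - t = Suc s" "M - Suc t = s" "s + t = 2*h" using True Mh by (auto simp: s_def)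
      have "(f s, f (Suc s)) \<in> (if even s then \<beta> else ?Y)" using fs s by blast
      moreover have "even s \<longleftrightarrow> even t" using s(4) by presburger
      ultimately have "(f (Suc s), f s) \<in> (if even t then \<beta> else ?Y)"
        using cong_sym[OF cR[of t]] unfolding sym_def by (auto split: if_splits)
      moreover have "(f t, f (Suc t)) \<in> (if even t then \<beta> else ?Y)" using fs True Mh by simp
      moreover have "(z,z) \<in> (if even t then \<beta> else ?Y)" using cong_refl[OF cR zc] .
      ultimately have "(top3 A p z (f t) (f (Suc s)), top3 A p z (f (Suc t)) (f s)) \<in> (if even t then \<beta> else ?Y)"
        using top3_cong[OF alg cR wp] by blast
      then show ?thesis using True s unfolding g_def by auto
    next
      case False
      then have th: "t = h" using tL h_def by auto
      have "M - h = Suc h" using Mh by simp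
      have fh: "f (Suc h) \<in> ?C" using fc Mh by simp
      have "(f h, f (Suc h)) \<in> (if even t then \<beta> else ?Y)" using fs th Mh by simp
      moreover have "(z,z) \<in> (if even t then \<beta> else ?Y)" using cong_refl[OF cR zc] .
      moreover have "(f (Suc h), f (Suc h)) \<in> (if even t then \<beta> else ?Y)" using cong_refl[OF cR fh] .
      ultimately have "(top3 A p z (f h) (f (Suc h)), top3 A p z (f (Suc h)) (f (Suc h))) \<in> (if even t then \<beta> else ?Y)"
        using top3_cong[OF alg cR wp] by blast
      then show ?thesis using th \<open>M - h = Suc h\<close> G2[OF zc fh] unfolding g_def by auto
    qed
  qed
  moreover have "g 0 = top3 A p z z x" using f0 fM by (simp add: g_def)
  moreover have "g L = z"
  proof -
    have "\<not> L \<le> h" using M by (simp add: h_def)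
    then show ?thesis by (simp add: g_def)
  qed
  ultimately have pg: "pth \<beta> ?Y L (top3 A p z z x) z" unfolding pth_def by blast
  have j1: "1 \<in> {1..n+1}" by simp
  have Pz: "top3 A p z z x = top3 A (j 1) z z x" using G3 zc xc by blast
  have "(top3 A (j 1) z z x, top3 A (j 1) z z z) \<in> \<alpha>"
    using top3_cong[OF alg ca] wj j1 cong_refl[OF ca zc] xza by blast
  moreover have "top3 A (j 1) z z z = z" using G1[OF zc zc] j1 by metis
  ultimately have "(top3 A p z z x, z) \<in> \<alpha>" using Pz by simp
  with pg have "(top3 A p z z x, z) \<in> \<alpha> \<inter> altc \<beta> ?Y L" by (simp add: altc_pth)
  with modL have "(top3 A p z z x, z) \<in> altc ?X ?Y k" by blast
  then have part1: "pth ?X ?Y k (top3 A p z z x) z" by (simp add: altc_pth)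
  have seg: "pth ?X ?Y M (top3 A (j i) z z x) (top3 A (j i) z x x)" if i: "i \<in> {1..n+1}" for i
  proof -
    define s where "s t = top3 A (j i) z (f t) x" for t
    have wji: "wf_trm ar (j i)" using wj i by blast
    have sa: "(s t, z) \<in> \<alpha>" if "t \<le> M" for t
    proof -
      have "(top3 A (j i) z (f t) x, top3 A (j i) z (f t) z) \<in> \<alpha>"
        by (rule top3_cong[OF alg ca wji cong_refl[OF ca zc] cong_refl[OF ca fc[OF that]] xza])
      moreover have "top3 A (j i) z (f t) z = z" using G1[OF zc fc[OF that]] i by (metis (no_types))
      ultimately show ?thesis by (simp add: s_def)
    qed
    have "fpath ?X ?Y M s" unfolding fpath_def
    proof (intro allI impI)
      fix t assume t: "t < M"
      have "(s t, s (Suc t)) \<in> (if even t then \<beta> else ?Y)"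
        unfolding s_def by (rule top3_cong[OF alg cR wji cong_refl[OF cR zc] fs[OF t] cong_refl[OF cR xc]])
      moreover have "(s t, s (Suc t)) \<in> \<alpha>"
      proof -
        have "(s t, z) \<in> \<alpha>" "(s (Suc t), z) \<in> \<alpha>" using sa t by auto
        then show ?thesis using cong_sym[OF ca] cong_trans[OF ca] unfolding sym_def trans_def by blast
      qed
      ultimately show "(s t, s (Suc t)) \<in> (if even t then ?X else ?Y)" by auto
    qed
    moreover have "s 0 = top3 A (j i) z z x" "s M = top3 A (j i) z x x" using f0 fM by (auto simp: s_def)
    ultimately show ?thesis unfolding pth_def by metis
  qed
  have segr: "pth ?X ?Y M (top3 A (j i) z x x) (top3 A (j i) z z x)" if i: "i \<in> {1..n+1}" for i
    using pth_rev[OF oM cong_sym[OF cX] cong_sym[OF cY] seg[OF i]] .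
  define w where "w i = (if odd i then top3 A (j i) z z x else top3 A (j i) z x x)" for i
  have oM1: "even (M - 1)" using oM by simp
  have chain: "1 \<le> i \<longrightarrow> i \<le> n+1 \<longrightarrow> pth ?X ?Y ((i-1)*(M-1)+1) (w 1) (w i)" for i
  proof (induction i)
    case 0 then show ?case by simp
  next
    case (Suc i)
    show ?case
    proof (cases "i = 0")
      case True
      have "w 1 \<in> ?C" unfolding w_def using top3_carrier[OF alg _ zc zc xc] wj by auto
      then have "(w 1, w 1) \<in> ?X" using cong_refl[OF cX] by blast
      then show ?thesis using True by (simp add: pth_Suc pth_0)
    next
      case False
      show ?thesis
      proof (intro impI)
        assume "Suc i \<le> n + 1"
        then have i: "i \<in> {1..n}" "i \<in> {1..n+1}" "Suc i \<in> {1..n+1}" using False by auto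
        have IH: "pth ?X ?Y ((i-1)*(M-1)+1) (w 1) (w i)" using Suc i by auto
        have "pth ?X ?Y M (w i) (w (Suc i))"
        proof (cases "odd i")
          case True
          have "w (Suc i) = top3 A (j i) z x x" using G4[OF zc xc i(1) True] True by (simp add: w_def)
          then show ?thesis using seg[OF i(2)] True by (simp add: w_def)
        next
          case False
          have "w (Suc i) = top3 A (j i) z z x" using G5[OF zc xc i(1)] False by (simp add: w_def)
          then show ?thesis using segr[OF i(2)] False by (simp add: w_def)
        qed
        moreover have "odd ((i-1)*(M-1)+1)" using oM1 by simp
        ultimately have "pth ?X ?Y ((i-1)*(M-1)+1 + M - 1) (w 1) (w (Suc i))"
          using pth_merge[OF _ cong_trans[OF cX] IH] M1 by blast
        moreover have "(i-1)*(M-1)+1 + M - 1 = (Suc i - 1)*(M-1)+1" using False M1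
          by (cases i; cases M) (auto simp: algebra_simps)
        ultimately show "pth ?X ?Y ((Suc i - 1)*(M-1)+1) (w 1) (w (Suc i))" by simp
      qed
    qed
  qed
  have "w 1 = top3 A p z z x" using Pz by (simp add: w_def)
  moreover have "w (n+1) = x" using G6[OF zc zc xc] G6[OF zc xc xc] by (simp add: w_def)
  ultimately have pz: "pth ?X ?Y (n*(M-1)+1) (top3 A p z z x) x" using chain[of "n+1"] by simp
  have on: "odd (n*(M-1)+1)" using oM1 by simp
  have "pth ?X ?Y (n*(M-1)+1) x (top3 A p z z x)"
    by (rule pth_rev[OF on cong_sym[OF cX] cong_sym[OF cY] pz])
  then have "pth ?X ?Y (n*(M-1)+1 + k - 1) x z"
    by (rule pth_merge[OF on cong_trans[OF cX] _ part1 k])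
  moreover have "n*(M-1)+1 + k - 1 = k + n*(M-1)" by simp
  ultimately show ?thesis unfolding altc_pth by (simp add: add.commute)
qed



lemma pth_trunc:
  assumes "pth X Y (Suc m) a c"
  shows "\<exists>b. pth X Y m a b \<and> (b,c) \<in> (if even m then X else Y)"
proof -
  obtain f where f: "f 0 = a" "f (Suc m) = c" "fpath X Y (Suc m) f" using assms unfolding pth_def by blast
  have "pth X Y m a (f m)" unfolding pth_def fpath_def using f unfolding fpath_def
    by (intro exI[of _ f]) auto
  moreover have "(f m, c) \<in> (if even m then X else Y)" using f unfolding fpath_def by auto
  ultimately show ?thesis by blast
qed

lemma lift_odd:
  assumes AV: "\<forall>A\<in>V. is_algebra ar A \<and> gumm A n p j"
    and wp: "wf_trm ar p" and wj: "\<forall>i\<in>{1..n+1}. wf_trm ar (j i)"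
    and mL: "mk_modular ar V L k" and k: "k \<ge> 1" and M: "M = 2*L - 1" "L \<ge> 1"
  shows "mk_modular ar V M (k + n*(M-1))"
  unfolding mk_modular_def
proof (intro ballI allI impI subsetI)
  fix A \<alpha> \<beta> \<gamma> xz
  assume A: "A \<in> V" and c: "congruence ar A \<alpha> \<and> congruence ar A \<beta> \<and> congruence ar A \<gamma>"
    and xz: "xz \<in> \<alpha> \<inter> altc \<beta> (\<alpha> \<inter> \<gamma>) M"
  obtain x z where xz': "xz = (x,z)" by (cases xz)
  have modL: "\<alpha> \<inter> altc \<beta> (\<alpha>\<inter>\<gamma>) L \<subseteq> altc (\<alpha>\<inter>\<beta>) (\<alpha>\<inter>\<gamma>) k"
    using mL A c unfolding mk_modular_def by blast
  show "xz \<in> altc (\<alpha> \<inter> \<beta>) (\<alpha> \<inter> \<gamma>) (k + n * (M - 1))"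
    using step_odd[of ar A \<alpha> \<beta> \<gamma> p n j M L k x z] AV A c wp wj M modL k xz xz' by blast
qed

lemma lift_even:
  assumes mm: "mk_modular ar V m k" and "odd m" "even k" "k \<ge> 2"
  shows "mk_modular ar V (m+1) k"
  unfolding mk_modular_def
proof (intro ballI allI impI subsetI)
  fix A \<alpha> \<beta> \<gamma> xz
  assume A: "A \<in> V" and c: "congruence ar A \<alpha> \<and> congruence ar A \<beta> \<and> congruence ar A \<gamma>"
    and xz: "xz \<in> \<alpha> \<inter> altc \<beta> (\<alpha> \<inter> \<gamma>) (m+1)"
  obtain x z where xz': "xz = (x,z)" by (cases xz)
  have modL: "\<alpha> \<inter> altc \<beta> (\<alpha>\<inter>\<gamma>) m \<subseteq> altc (\<alpha>\<inter>\<beta>) (\<alpha>\<inter>\<gamma>) k"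
    using mm A c unfolding mk_modular_def by blast
  have ca: "congruence ar A \<alpha>" and cY: "congruence ar A (\<alpha>\<inter>\<gamma>)" using c cong_Int by blast+
  have "pth \<beta> (\<alpha>\<inter>\<gamma>) (Suc m) x z" using xz xz' by (simp add: altc_pth)
  then obtain b where b: "pth \<beta> (\<alpha>\<inter>\<gamma>) m x b" "(b,z) \<in> \<alpha>\<inter>\<gamma>"
    using pth_trunc assms(2) by fastforce
  have "(x,z) \<in> \<alpha>" using xz xz' by blast
  then have "(x,b) \<in> \<alpha>" using b(2) cong_sym[OF ca] cong_trans[OF ca] unfolding sym_def trans_def by blast
  then have "(x,b) \<in> altc (\<alpha>\<inter>\<beta>) (\<alpha>\<inter>\<gamma>) k" using modL b(1) by (auto simp: altc_pth)
  then have "pth (\<alpha>\<inter>\<beta>) (\<alpha>\<inter>\<gamma>) k x z"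
    using pth_last[OF assms(3,4) cong_trans[OF cY] _ b(2)] by (simp add: altc_pth)
  then show "xz \<in> altc (\<alpha> \<inter> \<beta>) (\<alpha> \<inter> \<gamma>) k" using xz' by (simp add: altc_pth)
qed

lemma base22: "mk_modular ar V 2 2"
  unfolding mk_modular_def
proof (intro ballI allI impI subsetI)
  fix A \<alpha> \<beta> \<gamma> xz
  assume A: "A \<in> V" and c: "congruence ar A \<alpha> \<and> congruence ar A \<beta> \<and> congruence ar A \<gamma>"
    and xz: "xz \<in> \<alpha> \<inter> altc \<beta> (\<alpha> \<inter> \<gamma>) 2"
  have ca: "congruence ar A \<alpha>" using c by blast
  have two: "(2::nat) = Suc (Suc 0)" by simp
  obtain x z v where "xz = (x,z)" "(x,z) \<in> \<alpha>" "(x,v) \<in> \<beta>" "(v,z) \<in> \<alpha>\<inter>\<gamma>"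
    using xz unfolding two by auto
  moreover have "(x,v) \<in> \<alpha>" using calculation cong_sym[OF ca] cong_trans[OF ca] unfolding sym_def trans_def by blast
  ultimately show "xz \<in> altc (\<alpha> \<inter> \<beta>) (\<alpha> \<inter> \<gamma>) 2" unfolding two by auto
qed



theorem theorem4p8:
  fixes ar :: "'f \<Rightarrow> nat" and V :: "('f, 'a) alg set" and n :: nat
  assumes "variety ar V"
    and "has_gumm_terms ar V n"
  shows "(\<forall>q\<ge>1. mk_modular ar V (2^q + 1) ((2^(q+1) - 2) * n + 2)) \<and>
         (\<forall>q\<ge>2. mk_modular ar V (2^q - 1) ((2^(q+1) - 2*q - 2) * n + 2))"
proof -
  obtain p j where pj: "ternary ar p" "\<forall>i\<in>{1..n+1}. ternary ar (j i)"
    and idt: "\<forall>A\<in>V. gumm A n p j"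
    using assms(2) unfolding has_gumm_terms_def gumm_def by blast
  have alg: "\<forall>A\<in>V. is_algebra ar A" using assms(1) unfolding variety_def by blast
  have AV: "\<forall>A\<in>V. is_algebra ar A \<and> gumm A n p j" using alg idt by blast
  have wp: "wf_trm ar p" using pj unfolding ternary_def by blast
  have wj: "\<forall>i\<in>{1..n+1}. wf_trm ar (j i)" using pj unfolding ternary_def by blast
  note lift = lift_odd[OF AV wp wj]
  have m3: "mk_modular ar V 3 (2 + n*2)"
    using lift[OF base22, of 3] by simp
  have I: "mk_modular ar V (2^q + 1) ((2^(q+1) - 2) * n + 2)" if "q \<ge> 1" for q
    using that
  proof (induction q rule: dec_induct)
    case base
    have e: "(2::nat)^1+1 = 3" "(2^(1+1)-2)*n+2 = 2+n*(2::nat)" by simp_all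
    show ?case using m3 by (simp only: e)
  next
    case (step q)
    have "(1::nat) \<le> 2^q" by simp
    then have ge: "(2::nat) \<le> 2^(q+1)" by simp
    define b where "b = (2::nat)^(q+1) - 2"
    have b: "(2::nat)^(q+1) = b + 2" using ge unfolding b_def by linarith
    have "mk_modular ar V (2^(Suc q)+1) ((2^(q+1) - 2) * n + 2 + n*(2^(Suc q)+1-1))"
      using lift[OF step(3), of "2^(Suc q)+1"] by simp
    moreover have "(2^(q+1) - 2) * n + 2 + n*(2^(Suc q)+1-1) = (2^(Suc q+1) - 2) * n + (2::nat)"
      using b by (simp add: algebra_simps)
    ultimately show ?case by simp
  qed
  have II: "mk_modular ar V (2^q - 1) ((2^(q+1) - 2*q - 2) * n + 2)" if "q \<ge> 2" for q
    using that
  proof (induction q rule: dec_induct)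
    case base
    have e: "(2::nat)^2-1 = 3" "(2^(2+1)-2*2-2)*n+2 = 2+n*(2::nat)" by simp_all
    show ?case using m3 by (simp only: e)
  next
    case (step q)
    have "q < 2^q" by (rule less_exp)
    have pq: "(2::nat)^(q+1) = 2*2^q" by simp
    have ge: "2*q + 2 \<le> (2::nat)^(q+1)" using \<open>q < 2^q\<close> pq by linarith
    define c where "c = (2::nat)^(q+1) - 2*q - 2"
    have c: "(2::nat)^(q+1) = c + 2*q + 2" using ge unfolding c_def by linarith
    have "c = 2*(2^q - q - 1)" using c pq by linarith
    then have "even c" by simp
    then have ev: "even ((2^(q+1) - 2*q - 2) * n + (2::nat))" by (simp add: c_def[symmetric])
    have od: "odd ((2::nat)^q - 1)" using step(1) by simp
    have "(2::nat)^q - 1 + 1 = 2^q" by simp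
    then have mq: "mk_modular ar V (2^q) ((2^(q+1) - 2*q - 2) * n + 2)"
      using lift_even[OF step(3) od ev] by simp
    have "mk_modular ar V (2^(Suc q) - 1) ((2^(q+1) - 2*q - 2) * n + 2 + n*(2^(Suc q) - 1 - 1))"
      using lift[OF mq, of "2^(Suc q) - 1"] by simp
    moreover have "(2^(q+1) - 2*q - 2) * n + 2 + n*(2^(Suc q) - 1 - 1) = (2^(Suc q+1) - 2*Suc q - 2) * n + (2::nat)"
      using c by (simp add: algebra_simps)
    ultimately show ?case by simp
  qed
  show ?thesis using I II by blast
qed


end
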